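(* Let $(G,u,v,\alpha,\beta)$ be a Guvab with $\lim_{k\to\infty}W_k=0$. Then $\{W_k\}$ is eventually constant if and only if one of the following holds: (1) $\alpha=\beta=0$ and $N(u)=N(v)$; (2) $\alpha=\beta=\frac{1}{\deg u+1}$, $\{u,v\}\in E(G)$, and in the graph obtained by removing the edge $\{u,v\}$ from $G$, the vertices $u$ and $v$ have the same neighbor set; (3) $\alpha=\beta$ and $u=v$.
   Context: A Guvab is a tuple $(G,u,v,\alpha,\beta)$ where $G$ is a finite, connected, simple graph, $u,v\in V(G)$, and $\alpha,\beta\in[0,1]$ with $\alpha\le\beta$. A random walk on $G$ with starting vertex $w$ and laziness $\gamma$ is the Markov chain $R_0=w$ and, for $i\ge1$, $R_i=R_{i-1}$ with probability $\gamma$ and $R_i=t$ with probability $\frac{1-\gamma}{\deg(R_{i-1})}$ for each neighbor $t$ of $R_{i-1}$. $\mu_k$ is the distribution after $k$ steps of the walk from $u$ with laziness $\alpha$, $\nu_k$ that of the walk from $v$ with laziness $\beta$, and $W_k=W(\mu_k,\nu_k)$ is the Wasserstein ($L^1$ optimal transport) distance with respect to the graph distance. $N(w)$ is the neighbor set of $w$. A sequence $\{S_i\}$ is eventually constant if there is $N$ with $S_k=S_N$ for all $k\ge N$. *)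

theory Defs
  imports "HOL-Analysis.Analysis"
begin

definition edge_rel :: "('a \<Rightarrow> 'a \<Rightarrow> bool) \<Rightarrow> ('a \<times> 'a) set" where
  "edge_rel E = {(a, b). E a b}"

definition simple_graph :: "'a set \<Rightarrow> ('a \<Rightarrow> 'a \<Rightarrow> bool) \<Rightarrow> bool" where
  "simple_graph V E \<longleftrightarrow> finite V \<and> V \<noteq> {} \<and>
     (\<forall>x y. E x y \<longrightarrow> x \<in> V \<and> y \<in> V) \<and>
     (\<forall>x y. E x y \<longrightarrow> E y x) \<and> (\<forall>x. \<not> E x x)"

definition connected_graph :: "'a set \<Rightarrow> ('a \<Rightarrow> 'a \<Rightarrow> bool) \<Rightarrow> bool" where
  "connected_graph V E \<longleftrightarrow> (\<forall>x\<in>V. \<forall>y\<in>V. \<exists>n. (x, y) \<in> edge_rel E ^^ n)"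

definition nbrs :: "'a set \<Rightarrow> ('a \<Rightarrow> 'a \<Rightarrow> bool) \<Rightarrow> 'a \<Rightarrow> 'a set" where
  "nbrs V E w = {t \<in> V. E w t}"

definition deg :: "'a set \<Rightarrow> ('a \<Rightarrow> 'a \<Rightarrow> bool) \<Rightarrow> 'a \<Rightarrow> nat" where
  "deg V E w = card (nbrs V E w)"

definition gdist :: "('a \<Rightarrow> 'a \<Rightarrow> bool) \<Rightarrow> 'a \<Rightarrow> 'a \<Rightarrow> nat" where
  "gdist E x y = (LEAST n. (x, y) \<in> edge_rel E ^^ n)"

text \<open>Distribution after k steps of the lazy random walk started at w with
laziness \<gamma>: point masses on V, evolved by the transition kernel.\<close>
fun walk_dist :: "'a set \<Rightarrow> ('a \<Rightarrow> 'a \<Rightarrow> bool) \<Rightarrow> real \<Rightarrow> 'a \<Rightarrow> nat \<Rightarrow> 'a \<Rightarrow> real" where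
  "walk_dist V E \<gamma> w 0 = (\<lambda>y. if y = w then 1 else 0)"
| "walk_dist V E \<gamma> w (Suc k) = (\<lambda>y. \<gamma> * walk_dist V E \<gamma> w k y +
      (\<Sum>x\<in>nbrs V E y. (1 - \<gamma>) / real (deg V E x) * walk_dist V E \<gamma> w k x))"

definition coupling :: "'a set \<Rightarrow> ('a \<Rightarrow> real) \<Rightarrow> ('a \<Rightarrow> real) \<Rightarrow> ('a \<Rightarrow> 'a \<Rightarrow> real) \<Rightarrow> bool" where
  "coupling V \<mu> \<nu> \<pi> \<longleftrightarrow> (\<forall>x\<in>V. \<forall>y\<in>V. \<pi> x y \<ge> 0) \<and>
     (\<forall>x\<in>V. (\<Sum>y\<in>V. \<pi> x y) = \<mu> x) \<and> (\<forall>y\<in>V. (\<Sum>x\<in>V. \<pi> x y) = \<nu> y)"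

definition wasserstein :: "'a set \<Rightarrow> ('a \<Rightarrow> 'a \<Rightarrow> bool) \<Rightarrow> ('a \<Rightarrow> real) \<Rightarrow> ('a \<Rightarrow> real) \<Rightarrow> real" where
  "wasserstein V E \<mu> \<nu> = Inf {(\<Sum>x\<in>V. \<Sum>y\<in>V. \<pi> x y * real (gdist E x y)) | \<pi>. coupling V \<mu> \<nu> \<pi>}"

definition W_seq :: "'a set \<Rightarrow> ('a \<Rightarrow> 'a \<Rightarrow> bool) \<Rightarrow> 'a \<Rightarrow> 'a \<Rightarrow> real \<Rightarrow> real \<Rightarrow> nat \<Rightarrow> real" where
  "W_seq V E u v \<alpha> \<beta> k = wasserstein V E (walk_dist V E \<alpha> u k) (walk_dist V E \<beta> v k)"

definition eventually_const :: "(nat \<Rightarrow> 'b) \<Rightarrow> bool" where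
  "eventually_const S \<longleftrightarrow> (\<exists>N. \<forall>k\<ge>N. S k = S N)"

end

theory Submission
  imports Defs
begin


definition Tm :: "'a set \<Rightarrow> ('a \<Rightarrow> 'a \<Rightarrow> bool) \<Rightarrow> ('a \<Rightarrow> real) \<Rightarrow> 'a \<Rightarrow> real" where
  "Tm V E f = (\<lambda>y. \<Sum>x\<in>nbrs V E y. f x / real (deg V E x))"
definition Pm :: "'a set \<Rightarrow> ('a \<Rightarrow> 'a \<Rightarrow> bool) \<Rightarrow> real \<Rightarrow> ('a \<Rightarrow> real) \<Rightarrow> 'a \<Rightarrow> real" where
  "Pm V E g f = (\<lambda>y. g * f y + (1 - g) * Tm V E f y)"
definition ip :: "'a set \<Rightarrow> ('a \<Rightarrow> 'a \<Rightarrow> bool) \<Rightarrow> ('a \<Rightarrow> real) \<Rightarrow> ('a \<Rightarrow> real) \<Rightarrow> real" where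
  "ip V E f g = (\<Sum>x\<in>V. f x * g x / real (deg V E x))"

lemma walk_P: "walk_dist V E g w (Suc k) = Pm V E g (walk_dist V E g w k)"
  by (auto simp: Pm_def Tm_def sum_distrib_left intro!: sum.cong)

lemma walk_pow: "walk_dist V E g w (n + k) = (Pm V E g ^^ n) (walk_dist V E g w k)"
proof (induction n)
  case (Suc n)
  have "walk_dist V E g w (Suc n + k) = Pm V E g (walk_dist V E g w (n + k))"
    by (simp only: add_Suc walk_P)
  then show ?case using Suc by simp
qed simp

lemma Tm_diff: "Tm V E (\<lambda>x. f x - h x) = (\<lambda>y. Tm V E f y - Tm V E h y)"
  by (auto simp: Tm_def diff_divide_distrib sum_subtractf)

lemma Pm_diff: "Pm V E g (\<lambda>x. f x - h x) = (\<lambda>y. Pm V E g f y - Pm V E g h y)"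
  by (auto simp: Pm_def Tm_diff algebra_simps)

lemma Pm_pow_diff: "(Pm V E g ^^ n) (\<lambda>x. f x - h x) = (\<lambda>y. (Pm V E g ^^ n) f y - (Pm V E g ^^ n) h y)"
  by (induction n) (auto simp: Pm_diff)

locale G =
  fixes V :: "'a set" and E :: "'a \<Rightarrow> 'a \<Rightarrow> bool"
  assumes sg: "simple_graph V E" and dp: "\<And>x. x \<in> V \<Longrightarrow> deg V E x > 0"
begin

lemma finV: "finite V" using sg by (simp add: simple_graph_def)
lemma Ein: "E x y \<Longrightarrow> x \<in> V \<and> y \<in> V" using sg by (simp add: simple_graph_def)
lemma Esym: "E x y \<Longrightarrow> E y x" using sg by (simp add: simple_graph_def)
lemma Eirr: "\<not> E x x" using sg by (simp add: simple_graph_def)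
lemma nbrs_sub: "nbrs V E y \<subseteq> V" by (auto simp: nbrs_def)
lemma fin_nbrs: "finite (nbrs V E y)" using finV nbrs_sub finite_subset by blast

lemma Tm_local: "(\<And>x. x \<in> V \<Longrightarrow> f x = h x) \<Longrightarrow> Tm V E f y = Tm V E h y"
  unfolding Tm_def using nbrs_sub by (intro sum.cong) (auto simp: subset_iff)

lemma Pm_local: "(\<And>x. x \<in> V \<Longrightarrow> f x = h x) \<Longrightarrow> y \<in> V \<Longrightarrow> Pm V E g f y = Pm V E g h y"
  unfolding Pm_def using Tm_local[of f h y] by auto

lemma ip_local: "(\<And>x. x \<in> V \<Longrightarrow> f x = f' x) \<Longrightarrow> (\<And>x. x \<in> V \<Longrightarrow> h x = h' x) \<Longrightarrow> ip V E f h = ip V E f' h'"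
  unfolding ip_def by (auto intro!: sum.cong)

lemma ip_comm: "ip V E f h = ip V E h f"
  unfolding ip_def by (auto simp: mult.commute intro!: sum.cong)

lemma ip_add: "ip V E (\<lambda>x. f x + h x) k = ip V E f k + ip V E h k"
  unfolding ip_def by (simp add: sum.distrib[symmetric] algebra_simps add_divide_distrib)

lemma ip_scale: "ip V E (\<lambda>x. c * f x) k = c * ip V E f k"
  unfolding ip_def by (simp add: sum_distrib_left algebra_simps)

lemma ip_pos: "ip V E f f = 0 \<Longrightarrow> x \<in> V \<Longrightarrow> f x = 0"
proof -
  assume h: "ip V E f f = 0" "x \<in> V"
  have "\<forall>y\<in>V. f y * f y / real (deg V E y) = 0"
    using h(1) unfolding ip_def
    by (subst sum_nonneg_eq_0_iff[OF finV, symmetric]) (auto intro!: divide_nonneg_nonneg)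
  then show ?thesis using h(2) dp[OF h(2)] by auto
qed

lemma Tm_sum: "Tm V E f y = (\<Sum>x\<in>V. if E y x then f x / real (deg V E x) else 0)"
  unfolding Tm_def nbrs_def using finV by (simp add: sum.inter_filter)

lemma Tm_sym: "ip V E (Tm V E f) h = ip V E f (Tm V E h)"
proof -
  have "ip V E (Tm V E f) h = (\<Sum>y\<in>V. \<Sum>x\<in>V. if E y x then f x * h y / (real (deg V E x) * real (deg V E y)) else 0)"
    unfolding ip_def Tm_sum sum_distrib_right sum_divide_distrib
    by (intro sum.cong refl) auto
  also have "\<dots> = (\<Sum>x\<in>V. \<Sum>y\<in>V. if E y x then f x * h y / (real (deg V E x) * real (deg V E y)) else 0)"
    by (rule sum.swap)
  also have "\<dots> = ip V E f (Tm V E h)"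
    unfolding ip_def Tm_sum sum_distrib_right sum_divide_distrib sum_distrib_left
    by (intro sum.cong refl) (auto dest: Esym)
  finally show ?thesis .
qed


lemma Pm_sym: "ip V E (Pm V E g f) h = ip V E f (Pm V E g h)"
proof -
  have "ip V E (Pm V E g f) h = g * ip V E f h + (1 - g) * ip V E (Tm V E f) h"
    unfolding Pm_def by (simp add: ip_add ip_scale)
  also have "\<dots> = g * ip V E h f + (1 - g) * ip V E (Tm V E h) f"
    using Tm_sym[of f h] ip_comm[of f h] ip_comm[of f "Tm V E h"] by simp
  also have "\<dots> = ip V E (Pm V E g h) f"
    unfolding Pm_def by (simp add: ip_add ip_scale)
  finally show ?thesis by (simp add: ip_comm)
qed

lemma ip_zero: "(\<And>x. x \<in> V \<Longrightarrow> h x = 0) \<Longrightarrow> ip V E f h = 0"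
  unfolding ip_def by simp

lemma kill: "(\<And>x. x \<in> V \<Longrightarrow> (Pm V E g ^^ Suc n) f x = 0) \<Longrightarrow> x \<in> V \<Longrightarrow> Pm V E g f x = 0"
proof (induction n arbitrary: f x)
  case 0
  then show ?case by simp
next
  case (Suc n)
  have "(Pm V E g ^^ Suc n) (Pm V E g f) y = 0" if "y \<in> V" for y
    using Suc.prems(1)[OF that] by (simp only: funpow_Suc_right o_apply)
  then have "Pm V E g (Pm V E g f) y = 0" if "y \<in> V" for y
    using Suc.IH that by blast
  then have "ip V E (Pm V E g f) (Pm V E g f) = 0"
    by (simp add: Pm_sym ip_zero)
  then show ?case using ip_pos Suc.prems(2) by blast
qed

lemma orth:
  assumes "\<And>x. x \<in> V \<Longrightarrow> a * f x + c * Tm V E f x = 0"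
    and "\<And>x. x \<in> V \<Longrightarrow> b * h x + d * Tm V E h x = 0"
    and "a * d \<noteq> b * c"
  shows "ip V E f h = 0"
proof -
  have 1: "ip V E (\<lambda>x. c * Tm V E f x) h = ip V E (\<lambda>x. - a * f x) h"
    by (rule ip_local) (use assms(1) in \<open>auto simp: algebra_simps add_eq_0_iff\<close>)
  have 2: "ip V E (\<lambda>x. d * Tm V E h x) f = ip V E (\<lambda>x. - b * h x) f"
    by (rule ip_local) (use assms(2) in \<open>auto simp: algebra_simps add_eq_0_iff\<close>)
  have s: "ip V E (Tm V E f) h = ip V E (Tm V E h) f"
    using Tm_sym[of f h] ip_comm[of f "Tm V E h"] by simp
  have e1: "c * ip V E (Tm V E f) h = -a * ip V E f h"
    using 1 ip_scale[of c "Tm V E f" h] ip_scale[of "-a" f h] by simp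
  have e2: "d * ip V E (Tm V E h) f = -b * ip V E h f"
    using 2 ip_scale[of d "Tm V E h" f] ip_scale[of "-b" h f] by simp
  have "d * (- a * ip V E f h) = c * (- b * ip V E h f)"
    using s e1 e2 by (metis mult.left_commute)
  then have "(a * d - b * c) * ip V E f h = 0"
    using ip_comm[of h f] by (simp add: algebra_simps)
  then show ?thesis using assms(3) by simp
qed

lemma Tm_delta: "u \<in> V \<Longrightarrow> Tm V E (\<lambda>y. if y = u then 1 else 0) y = (if E y u then 1 / real (deg V E u) else 0)"
proof -
  assume u: "u \<in> V"
  have "Tm V E (\<lambda>y. if y = u then 1 else 0) y = (\<Sum>x\<in>V. if x = u then (if E y u then 1 / real (deg V E u) else 0) else 0)"
    unfolding Tm_sum by (intro sum.cong) auto
  also have "\<dots> = (if E y u then 1 / real (deg V E u) else 0)"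
    using u finV by (simp add: sum.delta)
  finally show ?thesis .
qed

lemma Tm_total: "(\<Sum>y\<in>V. Tm V E f y) = (\<Sum>y\<in>V. f y)"
proof -
  have "ip V E (Tm V E f) (\<lambda>y. real (deg V E y)) = (\<Sum>y\<in>V. Tm V E f y)"
    unfolding ip_def using dp by (auto intro!: sum.cong)
  moreover have "Tm V E (\<lambda>y. real (deg V E y)) y = real (deg V E y)" for y
  proof -
    have "Tm V E (\<lambda>y. real (deg V E y)) y = (\<Sum>x\<in>nbrs V E y. 1)"
      unfolding Tm_def using dp nbrs_sub by (intro sum.cong) (auto simp: subset_iff)
    then show ?thesis by (simp add: deg_def)
  qed
  then have "Tm V E (\<lambda>y. real (deg V E y)) = (\<lambda>y. real (deg V E y))" by (rule ext)
  moreover have "ip V E f (\<lambda>y. real (deg V E y)) = (\<Sum>y\<in>V. f y)"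
    unfolding ip_def using dp by (auto intro!: sum.cong)
  ultimately show ?thesis using Tm_sym[of f "\<lambda>y. real (deg V E y)"] by (simp del: of_nat_eq_iff)
qed

lemma Pm_total: "(\<Sum>y\<in>V. Pm V E g f y) = (\<Sum>y\<in>V. f y)"
  unfolding Pm_def by (simp add: sum.distrib sum_subtractf sum_distrib_left[symmetric] Tm_total algebra_simps)

lemma Tm_nonneg: "(\<And>x. f x \<ge> 0) \<Longrightarrow> Tm V E f y \<ge> 0"
  unfolding Tm_def by (auto intro!: sum_nonneg)

lemma walk_nonneg: "0 \<le> g \<Longrightarrow> g \<le> 1 \<Longrightarrow> walk_dist V E g w k y \<ge> 0"
proof (induction k arbitrary: y)
  case (Suc k)
  then show ?case unfolding walk_P Pm_def
    by (intro add_nonneg_nonneg mult_nonneg_nonneg Tm_nonneg) auto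
qed simp

lemma walk_total: "w \<in> V \<Longrightarrow> (\<Sum>y\<in>V. walk_dist V E g w k y) = 1"
proof (induction k)
  case 0
  then show ?case using finV by simp
next
  case (Suc k)
  then show ?case unfolding walk_P Pm_total by simp
qed

end


lemma gdist_refl: "gdist E x x = 0"
  unfolding gdist_def by (rule Least_eq_0) simp

lemma gdist_ge1: "connected_graph V E \<Longrightarrow> x \<in> V \<Longrightarrow> y \<in> V \<Longrightarrow> x \<noteq> y \<Longrightarrow> gdist E x y \<ge> 1"
proof -
  assume c: "connected_graph V E" "x \<in> V" "y \<in> V" "x \<noteq> y"
  then obtain n where "(x, y) \<in> edge_rel E ^^ n" unfolding connected_graph_def by blast
  then have "(x, y) \<in> edge_rel E ^^ gdist E x y" unfolding gdist_def by (rule LeastI)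
  then show ?thesis using c(4) by (cases "gdist E x y") auto
qed

lemma W_self:
  assumes "finite V" "\<And>x. x \<in> V \<Longrightarrow> f x \<ge> 0"
  shows "wasserstein V E f f = 0"
  unfolding wasserstein_def
proof (rule cInf_eq_minimum)
  let ?p = "\<lambda>x y. if x = y then f x else 0"
  have cp: "coupling V f f ?p"
    unfolding coupling_def using assms(2) by (simp add: sum.delta[OF assms(1)] sum.delta'[OF assms(1)])
  have s0: "(\<Sum>x\<in>V. \<Sum>y\<in>V. ?p x y * real (gdist E x y)) = 0"
    by (intro sum.neutral ballI) (auto simp: gdist_refl)
  show "0 \<in> {\<Sum>x\<in>V. \<Sum>y\<in>V. \<pi> x y * real (gdist E x y) |\<pi>. coupling V f f \<pi>}"
    by (intro CollectI exI[where x = ?p] conjI cp s0[symmetric])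
next
  fix z assume "z \<in> {\<Sum>x\<in>V. \<Sum>y\<in>V. \<pi> x y * real (gdist E x y) |\<pi>. coupling V f f \<pi>}"
  then show "0 \<le> z" by (auto simp: coupling_def intro!: sum_nonneg)
qed

lemma W_low:
  assumes fin: "finite V" and con: "connected_graph V E"
    and mn: "\<And>x. x \<in> V \<Longrightarrow> m x \<ge> 0" and nn: "\<And>x. x \<in> V \<Longrightarrow> n x \<ge> 0"
    and ms: "(\<Sum>x\<in>V. m x) = 1" and ns: "(\<Sum>x\<in>V. n x) = 1" and x: "x \<in> V"
  shows "\<bar>m x - n x\<bar> \<le> 2 * wasserstein V E m n"
proof -
  let ?S = "{\<Sum>x\<in>V. \<Sum>y\<in>V. \<pi> x y * real (gdist E x y) |\<pi>. coupling V m n \<pi>}"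
  have "coupling V m n (\<lambda>x y. m x * n y)"
    unfolding coupling_def using mn nn ms ns by (auto simp: sum_distrib_left[symmetric] sum_distrib_right[symmetric])
  then have ne: "?S \<noteq> {}" by blast
  have "\<bar>m x - n x\<bar> / 2 \<le> Inf ?S"
  proof (rule cInf_greatest[OF ne])
    fix z assume "z \<in> ?S"
    then obtain p where p: "coupling V m n p" and z: "z = (\<Sum>x\<in>V. \<Sum>y\<in>V. p x y * real (gdist E x y))"
      by blast
    have pn: "\<And>a b. a \<in> V \<Longrightarrow> b \<in> V \<Longrightarrow> p a b \<ge> 0" using p by (auto simp: coupling_def)
    define off where "off = (\<Sum>a\<in>V. \<Sum>b\<in>V. if a = b then 0 else p a b)"
    have "off \<le> z" unfolding off_def z
    proof (intro sum_mono)
      fix a b assume ab: "a \<in> V" "b \<in> V"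
      show "(if a = b then 0 else p a b) \<le> p a b * real (gdist E a b)"
        using gdist_ge1[OF con ab] pn[OF ab] by (cases "a = b") (auto simp: gdist_refl intro: mult_left_le_one_le order_trans[OF _ mult_left_mono[of 1]])
    qed
    have row: "(\<Sum>b\<in>V. if x = b then 0 else p x b) \<le> off" unfolding off_def
      by (rule member_le_sum[OF x _ fin, where f = "\<lambda>a. \<Sum>b\<in>V. if a = b then 0 else p a b"])
        (auto intro!: sum_nonneg pn)
    have off2: "off = (\<Sum>b\<in>V. \<Sum>a\<in>V. if a = b then 0 else p a b)"
      unfolding off_def by (rule sum.swap)
    have col: "(\<Sum>a\<in>V. if a = x then 0 else p a x) \<le> off" unfolding off2
      by (rule member_le_sum[OF x _ fin, where f = "\<lambda>b. \<Sum>a\<in>V. if a = b then 0 else p a b"])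
        (auto intro!: sum_nonneg pn)
    have mx: "m x = p x x + (\<Sum>b\<in>V. if x = b then 0 else p x b)"
    proof -
      have "m x = (\<Sum>b\<in>V. p x b)" using p x by (auto simp: coupling_def)
      also have "\<dots> = (\<Sum>b\<in>V. (if x = b then p x b else 0) + (if x = b then 0 else p x b))"
        by (intro sum.cong) auto
      also have "\<dots> = p x x + (\<Sum>b\<in>V. if x = b then 0 else p x b)"
        using x fin by (simp add: sum.distrib)
      finally show ?thesis .
    qed
    have nx: "n x = p x x + (\<Sum>a\<in>V. if a = x then 0 else p a x)"
    proof -
      have "n x = (\<Sum>a\<in>V. p a x)" using p x by (auto simp: coupling_def)
      also have "\<dots> = (\<Sum>a\<in>V. (if a = x then p a x else 0) + (if a = x then 0 else p a x))"
        by (intro sum.cong) auto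
      also have "\<dots> = p x x + (\<Sum>a\<in>V. if a = x then 0 else p a x)"
        using x fin by (simp add: sum.distrib)
      finally show ?thesis .
    qed
    have r0: "0 \<le> (\<Sum>b\<in>V. if x = b then 0 else p x b)" by (auto intro!: sum_nonneg pn x)
    have c0: "0 \<le> (\<Sum>a\<in>V. if a = x then 0 else p a x)" by (auto intro!: sum_nonneg pn x)
    have "m x - n x \<le> 2 * z" "n x - m x \<le> 2 * z"
      using mx nx row col r0 c0 \<open>off \<le> z\<close> by linarith+
    then show "\<bar>m x - n x\<bar> / 2 \<le> z" by (simp add: abs_if)
  qed
  then show ?thesis unfolding wasserstein_def by (simp add: field_simps)
qed



context G begin
lemma ip_add2: "ip V E k (\<lambda>x. f x + h x) = ip V E k f + ip V E k h"
  using ip_add[of f h k] ip_comm[of k] by simp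

lemma Esym_iff: "E x y \<longleftrightarrow> E y x" using Esym by blast

lemma Pm_delta: "u \<in> V \<Longrightarrow> Pm V E g (\<lambda>y. if y = u then 1 else 0) y =
   g * (if y = u then 1 else 0) + (1 - g) * (if E y u then 1 / real (deg V E u) else 0)"
  unfolding Pm_def using Tm_delta by simp
end

lemma walk1: "walk_dist V E g w (Suc 0) = Pm V E g (\<lambda>y. if y = w then 1 else 0)"
  by (simp only: walk_P walk_dist.simps(1))

lemma deg_pos:
  assumes "simple_graph V E" "connected_graph V E" "card V \<ge> 2" "x \<in> V"
  shows "deg V E x > 0"
proof -
  have fin: "finite V" using assms(1) by (simp add: simple_graph_def)
  obtain y where y: "y \<in> V" "y \<noteq> x"
  proof -
    have "\<not> V \<subseteq> {x}"
    proof
      assume "V \<subseteq> {x}"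
      then have "card V \<le> card {x}" by (intro card_mono) auto
      then show False using assms(3) by simp
    qed
    then show ?thesis using that by blast
  qed
  obtain n where "(x, y) \<in> edge_rel E ^^ n" using assms(2,4) y unfolding connected_graph_def by blast
  then obtain n' where "(x, y) \<in> edge_rel E ^^ Suc n'" using y(2) by (cases n) auto
  then obtain z where "(x, z) \<in> edge_rel E" using relpow_Suc_D2 by metis
  then have "E x z" by (simp add: edge_rel_def)
  then have "z \<in> nbrs V E x" using assms(1) by (simp add: nbrs_def simple_graph_def)
  moreover have "finite (nbrs V E x)" using fin by (simp add: nbrs_def)
  ultimately show ?thesis unfolding deg_def by (metis card_gt_0_iff empty_iff)
qed



theorem theorem6p6:
  fixes V :: "'a set" and E :: "'a \<Rightarrow> 'a \<Rightarrow> bool" and u v :: 'a and \<alpha> \<beta> :: real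
  assumes "simple_graph V E" and "connected_graph V E" and "card V \<ge> 2"
    and "u \<in> V" and "v \<in> V"
    and "0 \<le> \<alpha>" and "\<alpha> \<le> \<beta>" and "\<beta> \<le> 1"
    and "W_seq V E u v \<alpha> \<beta> \<longlonglongrightarrow> 0"
  shows "eventually_const (W_seq V E u v \<alpha> \<beta>) \<longleftrightarrow>
    ((\<alpha> = 0 \<and> \<beta> = 0 \<and> nbrs V E u = nbrs V E v)
     \<or> (\<alpha> = 1 / (real (deg V E u) + 1) \<and> \<beta> = \<alpha> \<and> E u v \<and>
        nbrs V E u - {v} = nbrs V E v - {u})
     \<or> (\<alpha> = \<beta> \<and> u = v))"
proof -
  note sg = assms(1) and con = assms(2) and uV = assms(4) and vV = assms(5)
  have dp: "\<And>x. x \<in> V \<Longrightarrow> deg V E x > 0" by (rule deg_pos[OF assms(1-3)])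
  interpret G V E using sg dp by unfold_locales auto
  define mu where "mu = walk_dist V E \<alpha> u"
  define nu where "nu = walk_dist V E \<beta> v"
  define W where "W = W_seq V E u v \<alpha> \<beta>"
  have W_def': "W k = wasserstein V E (mu k) (nu k)" for k
    unfolding W_def W_seq_def mu_def nu_def by simp
  have mun: "mu k x \<ge> 0" "nu k x \<ge> 0" for k x
    unfolding mu_def nu_def using assms(6-8) by (auto intro!: walk_nonneg)
  have mus: "(\<Sum>x\<in>V. mu k x) = 1" "(\<Sum>x\<in>V. nu k x) = 1" for k
    unfolding mu_def nu_def using uV vV walk_total by auto
  have W0: "W k = 0 \<Longrightarrow> x \<in> V \<Longrightarrow> mu k x = nu k x" for k x
    using W_low[OF finV con, of "mu k" "nu k" x] mun mus unfolding W_def' by auto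
  have W1: "mu k = nu k \<Longrightarrow> W k = 0" for k
    unfolding W_def' using W_self[OF finV, of "mu k" E] mun by auto
  show ?thesis unfolding W_def[symmetric]
  proof
    assume "eventually_const W"
    show "((\<alpha> = 0 \<and> \<beta> = 0 \<and> nbrs V E u = nbrs V E v)
     \<or> (\<alpha> = 1 / (real (deg V E u) + 1) \<and> \<beta> = \<alpha> \<and> E u v \<and>
        nbrs V E u - {v} = nbrs V E v - {u})
     \<or> (\<alpha> = \<beta> \<and> u = v))"
    proof -
      obtain N0 where N0: "\<forall>k\<ge>N0. W k = W N0" using \<open>eventually_const W\<close>
        unfolding eventually_const_def by blast
      have "(\<lambda>k. W N0) \<longlonglongrightarrow> 0"
      proof -
        have "eventually (\<lambda>k. W k = W N0) sequentially"
          using N0 eventually_sequentially by blast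
        then show ?thesis using assms(9) tendsto_cong[of W "\<lambda>k. W N0" sequentially] unfolding W_def by auto
      qed
      then have "W N0 = 0" using LIMSEQ_const_iff by blast
      define N where "N = Suc N0"
      have eqk: "mu k x = nu k x" if "k \<ge> N" "x \<in> V" for k x
        using W0[of k x] N0 that \<open>W N0 = 0\<close> unfolding N_def by auto
      define eu where "eu = (\<lambda>y. if y = u then 1 else (0::real))"
      define ev where "ev = (\<lambda>y. if y = v then 1 else (0::real))"
      have mu_pow: "mu (n + k) = (Pm V E \<alpha> ^^ n) (mu k)" for n k unfolding mu_def by (rule walk_pow)
      have nu_pow: "nu (n + k) = (Pm V E \<beta> ^^ n) (nu k)" for n k unfolding nu_def by (rule walk_pow)
      have mu0: "mu 0 = eu" unfolding mu_def eu_def by (rule ext) simp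
      have nu0: "nu 0 = ev" unfolding nu_def ev_def by (rule ext) simp
      have Tu: "Tm V E eu y = (if E y u then 1 / real (deg V E u) else 0)" for y
        unfolding eu_def using Tm_delta[OF uV] by simp
      have Tv: "Tm V E ev y = (if E y v then 1 / real (deg V E v) else 0)" for y
        unfolding ev_def using Tm_delta[OF vV] by simp
      show ?thesis
      proof (cases "\<alpha> = \<beta>")
        case True
        define d where "d = (\<lambda>x. eu x - ev x)"
        have "(Pm V E \<alpha> ^^ Suc N0) d x = 0" if "x \<in> V" for x
        proof -
          have e1: "(Pm V E \<alpha> ^^ Suc N0) eu = mu N"
            using mu_pow[of "Suc N0" 0] unfolding mu0 N_def by simp
          have e2: "(Pm V E \<alpha> ^^ Suc N0) ev = nu N"
            using nu_pow[of "Suc N0" 0] unfolding nu0 N_def True by simp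
          have "(Pm V E \<alpha> ^^ Suc N0) d x = mu N x - nu N x"
            unfolding d_def Pm_pow_diff e1 e2 ..
          then show ?thesis using eqk[of N x] that by simp
        qed
        then have dk: "Pm V E \<alpha> d x = 0" if "x \<in> V" for x using kill[where g=\<alpha> and n=N0 and f=d] that by blast
        then have eqA: "Pm V E \<alpha> eu x = Pm V E \<alpha> ev x" if "x \<in> V" for x
        proof -
          have "Pm V E \<alpha> eu x - Pm V E \<alpha> ev x = 0"
            using dk[OF that] unfolding d_def Pm_diff .
          then show ?thesis by simp
        qed
        have fA: "Pm V E \<alpha> eu y = \<alpha> * (if y = u then 1 else 0) + (1 - \<alpha>) * (if E y u then 1 / real (deg V E u) else 0)"
             "Pm V E \<alpha> ev y = \<alpha> * (if y = v then 1 else 0) + (1 - \<alpha>) * (if E y v then 1 / real (deg V E v) else 0)" for y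
          unfolding Pm_def Tu Tv by (auto simp: eu_def ev_def)
        show ?thesis
        proof (cases "u = v")
          case True
          then show ?thesis using \<open>\<alpha> = \<beta>\<close> by blast
        next
          case uv: False
          have du: "deg V E u > 0" "deg V E v > 0" using dp uV vV by auto
          have atu: "\<alpha> = (1 - \<alpha>) * (if E u v then 1 / real (deg V E v) else 0)"
            using eqA[OF uV] fA[of u] uv Eirr by simp
          have atv: "(1 - \<alpha>) * (if E u v then 1 / real (deg V E u) else 0) = \<alpha>"
            using eqA[OF vV] fA[of v] uv Eirr[of v] Esym_iff[of v u] by simp
          have a1: "\<alpha> \<noteq> 1" using atu by auto
          show ?thesis
          proof (cases "E u v")
            case False
            then have a0: "\<alpha> = 0" using atu by simp
            have "E x u \<longleftrightarrow> E x v" if "x \<in> V" for x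
            proof -
              have "x \<noteq> u" "x \<noteq> v" if "E x u \<or> E x v" using that Eirr[of u] Eirr[of v] False Esym_iff[of u v] by auto
              then have "(if E x u then 1 / real (deg V E u) else 0) = (if E x v then 1 / real (deg V E v) else 0)"
                using eqA[OF that] fA[of x] a0 by (cases "E x u \<or> E x v") auto
              then show ?thesis using du by (auto split: if_splits)
            qed
            then have "E u t \<longleftrightarrow> E v t" if "t \<in> V" for t using that Esym_iff[of u t] Esym_iff[of v t] by simp
            then have "nbrs V E u = nbrs V E v" unfolding nbrs_def by auto
            then show ?thesis using a0 True by simp
          next
            case euv: True
            have "(1 - \<alpha>) * (1 / real (deg V E v)) = (1 - \<alpha>) * (1 / real (deg V E u))"
              using atu atv euv by simp
            then have dd: "deg V E u = deg V E v" using a1 du by (simp add: field_simps)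
            have aval: "\<alpha> = 1 / (real (deg V E u) + 1)"
              using atv euv du by (simp add: field_simps)
            have "E x u \<longleftrightarrow> E x v" if "x \<in> V" "x \<noteq> u" "x \<noteq> v" for x
            proof -
              have "(1 - \<alpha>) * (if E x u then 1 / real (deg V E u) else 0) = (1 - \<alpha>) * (if E x v then 1 / real (deg V E v) else 0)"
                using eqA[OF that(1)] fA[of x] that by simp
              then show ?thesis using du a1 dd by (auto split: if_splits)
            qed
            then have "E u t \<longleftrightarrow> E v t" if "t \<in> V" "t \<noteq> u" "t \<noteq> v" for t using that Esym_iff[of u t] Esym_iff[of v t] by simp
            then have "nbrs V E u - {v} = nbrs V E v - {u}" unfolding nbrs_def using Eirr[of u] Eirr[of v] by auto
            then show ?thesis using aval True euv by blast
          qed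
        qed
      next
        case False
        then have ab: "\<alpha> < \<beta>" using assms(7) by simp
        have Th: "Tm V E (mu k) y = mu k y" if "k \<ge> N" "y \<in> V" for k y
        proof -
          have "Pm V E \<alpha> (mu k) y = Pm V E \<beta> (nu k) y"
            using eqk[of "Suc k" y] that unfolding mu_def nu_def by (simp del: walk_dist.simps add: walk_P)
          also have "\<dots> = Pm V E \<beta> (mu k) y" using Pm_local[of "nu k" "mu k" y \<beta>] eqk that by auto
          finally have "(\<beta> - \<alpha>) * (mu k y - Tm V E (mu k) y) = 0" unfolding Pm_def by (simp add: algebra_simps)
          then show ?thesis using ab by simp
        qed
        have stay: "mu (N + j) y = mu N y" if "y \<in> V" for j y
        proof (induction j)
          case (Suc j)
          have "mu (N + Suc j) y = Pm V E \<alpha> (mu (N + j)) y" unfolding mu_def by (simp del: walk_dist.simps add: walk_P)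
          also have "\<dots> = mu (N + j) y" unfolding Pm_def using Th[of "N + j" y] that by (simp add: algebra_simps)
          finally show ?case using Suc by simp
        qed simp
        define h where "h = mu N"
        define yy where "yy = (\<lambda>x. eu x - h x)"
        define zz where "zz = (\<lambda>x. ev x - nu N x)"
        have "(Pm V E \<alpha> ^^ Suc N0) yy x = 0" if "x \<in> V" for x
        proof -
          have "(Pm V E \<alpha> ^^ Suc N0) yy x = mu N x - mu (N + N) x"
            unfolding yy_def Pm_pow_diff h_def using mu_pow[of N 0] mu_pow[of N N] mu0 N_def by simp
          then show ?thesis using stay[OF that, of N] by simp
        qed
        then have yk: "\<alpha> * yy x + (1 - \<alpha>) * Tm V E yy x = 0" if "x \<in> V" for x
          using kill[where n=N0] that unfolding Pm_def by blast
        have "(Pm V E \<beta> ^^ Suc N0) zz x = 0" if "x \<in> V" for x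
        proof -
          have "(Pm V E \<beta> ^^ Suc N0) zz x = nu N x - nu (N + N) x"
            unfolding zz_def Pm_pow_diff using nu_pow[of N 0] nu_pow[of N N] nu0 N_def by simp
          then show ?thesis using stay[OF that, of N] eqk[of N x] eqk[of "N + N" x] that by simp
        qed
        then have zk: "\<beta> * zz x + (1 - \<beta>) * Tm V E zz x = 0" if "x \<in> V" for x
          using kill[where n=N0] that unfolding Pm_def by blast
        have hk: "1 * h x + (-1) * Tm V E h x = 0" if "x \<in> V" for x
          using Th[of N x] that unfolding h_def by simp
        have o1: "ip V E yy zz = 0"
          by (rule orth[OF yk zk]) (use ab in \<open>auto simp: algebra_simps\<close>)
        have o2: "ip V E h yy = 0"
          by (rule orth[OF hk yk]) (auto simp: algebra_simps)
        have o3: "ip V E h zz = 0"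
          by (rule orth[OF hk zk]) (auto simp: algebra_simps)
        have hnu: "h x = nu N x" if "x \<in> V" for x using eqk[of N x] that unfolding h_def by simp
        show ?thesis
        proof (cases "u = v")
          case True
          have "ip V E yy yy = ip V E yy zz"
            by (rule ip_local) (auto simp: yy_def zz_def eu_def ev_def True hnu)
          then have "ip V E yy yy = 0" using o1 by simp
          then have "yy x = 0" if "x \<in> V" for x using ip_pos that by blast
          then have "eu x = h x" if "x \<in> V" for x using that unfolding yy_def by simp
          then have "Tm V E eu u = Tm V E h u" using Tm_local by blast
          then have "Tm V E eu u = eu u" using Th[of N u] uV unfolding h_def
            using \<open>\<And>x. x \<in> V \<Longrightarrow> eu x = h x\<close> by (simp add: h_def)
          then show ?thesis using Tu[of u] Eirr by (simp add: eu_def)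
        next
          case uv: False
          have "ip V E eu ev = 0" unfolding ip_def eu_def ev_def using uv by (auto intro!: sum.neutral)
          moreover have "ip V E eu ev = ip V E (\<lambda>x. h x + yy x) (\<lambda>x. h x + zz x)"
            by (rule ip_local) (auto simp: yy_def zz_def hnu)
          moreover have "ip V E (\<lambda>x. h x + yy x) (\<lambda>x. h x + zz x) =
              ip V E h h + ip V E h zz + ip V E h yy + ip V E yy zz"
            by (simp add: ip_add ip_add2 ip_comm[of yy h])
          ultimately have "ip V E h h = 0" using o1 o2 o3 by simp
          then have h0: "h x = 0" if "x \<in> V" for x using ip_pos that by blast
          have "Pm V E \<alpha> eu x = Pm V E \<alpha> yy x" if "x \<in> V" for x
            by (rule Pm_local[OF _ that]) (auto simp: yy_def h0)
          then have A0: "Pm V E \<alpha> eu x = 0" if "x \<in> V" for x using yk that unfolding Pm_def by simp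
          have a0: "\<alpha> = 0" using A0[OF uV] Tu[of u] Eirr unfolding Pm_def by (simp add: eu_def)
          obtain w where w: "w \<in> nbrs V E u" using dp[OF uV] unfolding deg_def by (metis card.empty ex_in_conv less_irrefl)
          then have "w \<in> V" "E w u" "w \<noteq> u" using Esym_iff[of u w] Eirr[of u] by (auto simp: nbrs_def)
          then show ?thesis using A0[of w] a0 Tu[of w] dp[OF uV] unfolding Pm_def by (simp add: eu_def)
        qed
      qed
    qed
  next
    assume "((\<alpha> = 0 \<and> \<beta> = 0 \<and> nbrs V E u = nbrs V E v)
     \<or> (\<alpha> = 1 / (real (deg V E u) + 1) \<and> \<beta> = \<alpha> \<and> E u v \<and>
        nbrs V E u - {v} = nbrs V E v - {u})
     \<or> (\<alpha> = \<beta> \<and> u = v))"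
    then consider (c1) "\<alpha> = 0" "\<beta> = 0" "nbrs V E u = nbrs V E v"
      | (c2) "\<alpha> = 1 / (real (deg V E u) + 1)" "\<beta> = \<alpha>" "E u v" "nbrs V E u - {v} = nbrs V E v - {u}"
      | (c3) "\<alpha> = \<beta>" "u = v" by blast
    then show "eventually_const W"
    proof cases
      case c3
      then have "mu k = nu k" for k unfolding mu_def nu_def by simp
      then show ?thesis unfolding eventually_const_def using W1 by auto
    next
      case c1
      have "mu 1 = nu 1"
      proof
        fix y
        have "E y u \<longleftrightarrow> E y v" using c1(3) uV vV Ein Esym unfolding nbrs_def by blast
        moreover have "deg V E u = deg V E v" using c1(3) by (simp add: deg_def)
        ultimately show "mu 1 y = nu 1 y" unfolding mu_def nu_def
          using Pm_delta[OF uV, of \<alpha> y] Pm_delta[OF vV, of \<beta> y] c1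
          unfolding One_nat_def walk1 by simp
      qed
      then have "mu k = nu k" if "k \<ge> 1" for k using that
      proof (induction k)
        case (Suc k)
        then show ?case using c1 unfolding mu_def nu_def
          by (cases "k = 0") (auto simp: walk_P)
      qed simp
      then show ?thesis unfolding eventually_const_def using W1
        by (intro exI[of _ 1]) auto
    next
      case c2
      have uv: "u \<noteq> v" using c2(3) Eirr by auto
      have "deg V E u = deg V E v"
      proof -
        have "card (nbrs V E u - {v}) = card (nbrs V E v - {u})" using c2(4) by simp
        moreover have "v \<in> nbrs V E u" "u \<in> nbrs V E v" using c2(3) Ein Esym by (auto simp: nbrs_def)
        ultimately show ?thesis unfolding deg_def using fin_nbrs
          by (metis card_Diff_singleton card_gt_0_iff diff_Suc_1 empty_iff Suc_pred)
      qed
      moreover have "deg V E u > 0" using dp uV by blast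
      moreover have "E v u" using c2(3) Esym by blast
      ultimately have "mu 1 = nu 1"
      proof -
        assume dd: "deg V E u = deg V E v" "deg V E u > 0" "E v u"
        have key: "(1 - \<alpha>) * (1 / real (deg V E u)) = \<alpha>"
          using c2(1) dd(2) by (simp add: field_simps)
        show ?thesis
        proof
          fix y
          have m1: "mu 1 y = \<alpha> * (if y = u then 1 else 0) + (1 - \<alpha>) * (if E y u then 1 / real (deg V E u) else 0)"
            unfolding mu_def One_nat_def walk1 using Pm_delta[OF uV, of \<alpha> y] by simp
          have n1: "nu 1 y = \<alpha> * (if y = v then 1 else 0) + (1 - \<alpha>) * (if E y v then 1 / real (deg V E u) else 0)"
            unfolding nu_def One_nat_def walk1 using Pm_delta[OF vV, of \<beta> y] c2(2) dd(1) by simp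
          show "mu 1 y = nu 1 y"
          proof (cases "y = u \<or> y = v")
            case True
            then show ?thesis using m1 n1 key uv c2(3) dd(3) Eirr by auto
          next
            case False
            have "E y u \<longleftrightarrow> E y v" using c2(4) False Ein Esym unfolding nbrs_def by blast
            then show ?thesis using m1 n1 False by simp
          qed
        qed
      qed
      then have "mu k = nu k" if "k \<ge> 1" for k using that
      proof (induction k)
        case (Suc k)
        then show ?case using c2 unfolding mu_def nu_def
          by (cases "k = 0") (auto simp: walk_P)
      qed simp
      then show ?thesis unfolding eventually_const_def using W1
        by (intro exI[of _ 1]) auto
    qed
  qed
qed

end
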